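(* Let $|V\rangle$ be a KP tau-function in the big cell and $l_z$ a lifting operator for $|V\rangle$. Then $\langle0|\hat l=\langle0|\psi^*_{\frac12}\psi_{-\frac12}$.
   Context: Charged fermions $\psi_k,\psi_k^*$ ($k\in\mathbb{Z}+\frac12$) with $[\psi_i,\psi^*_j]_+=\delta_{ij}$, other anticommutators zero; dual vacuum $\langle0|$ with $\langle0|\psi_k=\langle0|\psi^*_{-k}=0$ for $k>0$; vacuum expectation $\langle0|\cdot|0\rangle$; normal ordering $:\!ab\!:\,=ab-\langle0|ab|0\rangle$; fields $\psi(z)=\sum z^{k-\frac12}\psi_k$, $\psi^*(z)=\sum z^{-k-\frac12}\psi^*_k$. For $a\in w_{1+\infty}=\mathrm{span}\{z^i\partial_z^j\}$, $\hat a=\mathrm{Res}_z\big(:\!\psi^*(z)\,(a\cdot\psi(z))\!:\big)$. $|V\rangle$ in the big cell means $|V\rangle=c\cdot\varphi_0\wedge\varphi_1\wedge\cdots$ ($c\ne0$) in the semi-infinite wedge space of $z^{1/2}\mathbb{C}[z,z^{-1}]]$, with admissible basis $\varphi_k=z^{k+\frac12}+\sum_{i\ge1-k}a_{k,i}z^{-i+\frac12}$. A lifting operator is $l_z\in w_{1+\infty}$ (graded by $\deg z=1,\deg\partial_z=-1$) such that for some admissible basis and constants $a_k$, $(z^{\frac12}l_zz^{-\frac12})^k\varphi_0=a_k\varphi_k$ for all $k\ge1$, and the degree-one part $\sum_{k\ge0}c_k(z\partial_z)^kz$ of $l_z$ has $c_0=1$. *)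

theory Defs
  imports "HOL-Analysis.Analysis"
begin

text \<open>Half-integer mode indices k in Z+1/2 are encoded by integers n with k = n + 1/2.
  So psi n stands for the fermion psi_{n+1/2}, psistar n for psi^*_{n+1/2}.
  In particular psi_{-1/2} = psi (-1) and psi^*_{1/2} = psistar 0.\<close>

text \<open>A basis bra is indexed by a finite set D of integers: it is
  the bra vac . X_{d1} ... X_{dr} (d1 < ... < dr the elements of D), where
  X_n = psi^*_{n+1/2} if n \<ge> 0 and X_n = psi_{n+1/2} if n < 0.
  A bra is a coefficient function on such sets.  The operators act from the right;
  for a bra f and operators A, B, the bra f.(A B) is (f.A).B .\<close>

type_synonym bra = "int set \<Rightarrow> complex"

definition vac :: bra where
  "vac = (\<lambda>D. if D = {} then 1 else 0)"

definition bsign :: "int set \<Rightarrow> int \<Rightarrow> complex" where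
  "bsign D n = (-1) ^ card {d \<in> D. n < d}"

text \<open>right multiplication by the creation-type operator X_n\<close>
definition braX :: "int \<Rightarrow> bra \<Rightarrow> bra" where
  "braX n f = (\<lambda>E. if n \<in> E then bsign E n * f (E - {n}) else 0)"

text \<open>right multiplication by the partner (annihilation-type) operator of X_n\<close>
definition braY :: "int \<Rightarrow> bra \<Rightarrow> bra" where
  "braY n f = (\<lambda>E. if n \<notin> E then bsign E n * f (insert n E) else 0)"

definition psi :: "int \<Rightarrow> bra \<Rightarrow> bra" where
  "psi n f = (if n < 0 then braX n f else braY n f)"

definition psistar :: "int \<Rightarrow> bra \<Rightarrow> bra" where
  "psistar n f = (if 0 \<le> n then braX n f else braY n f)"

definition vev :: "bra \<Rightarrow> complex" where
  "vev b = b {}"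

text \<open>f . :psi^*_{p+1/2} psi_{n+1/2}: , with :ab: = ab - <0|ab|0>\<close>
definition normal_pair :: "int \<Rightarrow> int \<Rightarrow> bra \<Rightarrow> bra" where
  "normal_pair p n f = (\<lambda>E. psi n (psistar p f) E - vev (psi n (psistar p vac)) * f E)"

text \<open>An element a of w_{1+infinity} is the finite sum  sum a(i,j) z^i d_z^j
  (i :: int, j :: nat); it is given by its finitely supported coefficient function.\<close>

definition w1inf :: "(int \<times> nat \<Rightarrow> complex) set" where
  "w1inf = {a. finite {ij. a ij \<noteq> 0}}"

definition ffact :: "nat \<Rightarrow> int \<Rightarrow> complex" where
  "ffact j x = (\<Prod>t<j. of_int x - of_nat t)"

text \<open>A series g :: int => complex stands for sum_n g n z^n (integer powers).
  Since z^i d^j z^n = ffact j n z^(n+i-j), the action is:\<close>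
definition diffop_act :: "(int \<times> nat \<Rightarrow> complex) \<Rightarrow> (int \<Rightarrow> complex) \<Rightarrow> (int \<Rightarrow> complex)" where
  "diffop_act a g = (\<lambda>m. \<Sum>ij\<in>{ij. a ij \<noteq> 0}.
      a ij * ffact (snd ij) (m + int (snd ij) - fst ij) * g (m + int (snd ij) - fst ij))"

definition monomial :: "int \<Rightarrow> int \<Rightarrow> complex" where
  "monomial n = (\<lambda>m. if m = n then 1 else 0)"

definition deg_part :: "(int \<times> nat \<Rightarrow> complex) \<Rightarrow> int \<Rightarrow> (int \<times> nat \<Rightarrow> complex)" where
  "deg_part a d = (\<lambda>ij. if fst ij - int (snd ij) = d then a ij else 0)"

text \<open>With psi(z) = sum_n z^n psi_{n+1/2}, psi^*(z) = sum_p z^(-p-1) psi^*_{p+1/2}, one has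
  Res_z :psi^*(z) (a.psi(z)): = sum_{n,p} [z^p](a z^n) :psi^*_{p+1/2} psi_{n+1/2}: .
  Its right action on a bra is defined coefficientwise (for each basis bra only finitely
  many terms are nonzero when the bra is the vacuum).\<close>
definition hat :: "(int \<times> nat \<Rightarrow> complex) \<Rightarrow> bra \<Rightarrow> bra" where
  "hat a f = (\<lambda>E. \<Sum>\<^sub>\<infinity>pn\<in>UNIV. diffop_act a (monomial (snd pn)) (fst pn)
                                  * normal_pair (fst pn) (snd pn) f E)"

text \<open>An element of z^(1/2) C[z,z^-1]] is encoded by h :: int => complex, h n being the
  coefficient of z^(n+1/2).  Under this encoding z^(1/2) l z^(-1/2) acts as diffop_act l.
  An admissible basis: phi_k = z^(k+1/2) + sum_(i \<ge> 1-k) a_(k,i) z^(-i+1/2).\<close>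
definition admissible_basis :: "(nat \<Rightarrow> int \<Rightarrow> complex) \<Rightarrow> bool" where
  "admissible_basis \<phi> \<longleftrightarrow> (\<forall>k. \<phi> k (int k) = 1 \<and> (\<forall>n. int k < n \<longrightarrow> \<phi> k n = 0))"

text \<open>l is a lifting operator for the big-cell point |V> = c phi_0 /\ phi_1 /\ ...
  with admissible basis phi.  The degree-one condition says: the degree-one part of l
  equals sum_k c_k (z d_z)^k z (as operators, i.e. on every series) with c_0 = 1;
  note ((z d_z)^k z) z^n = (n+1)^k z^(n+1).\<close>
definition lifting_operator :: "(int \<times> nat \<Rightarrow> complex) \<Rightarrow> (nat \<Rightarrow> int \<Rightarrow> complex) \<Rightarrow> bool" where
  "lifting_operator l \<phi> \<longleftrightarrow>
     l \<in> w1inf \<and>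
     (\<exists>a :: nat \<Rightarrow> complex. \<forall>k\<ge>1. a k \<noteq> 0 \<and>
         (diffop_act l ^^ k) (\<phi> 0) = (\<lambda>n. a k * \<phi> k n)) \<and>
     (\<exists>c :: nat \<Rightarrow> complex. finite {k. c k \<noteq> 0} \<and> c 0 = 1 \<and>
         (\<forall>g. diffop_act (deg_part l 1) g =
               (\<lambda>m. \<Sum>k\<in>{k. c k \<noteq> 0}. c k * of_int m ^ k * g (m - 1))))"

end

theory Submission
  imports Defs
begin

definition Pd :: "(int \<times> nat \<Rightarrow> complex) \<Rightarrow> int \<Rightarrow> int \<Rightarrow> complex" where
  "Pd a d x = (\<Sum>ij\<in>{ij. a ij \<noteq> 0 \<and> fst ij - int (snd ij) = d}. a ij * ffact (snd ij) x)"

lemma diffop_group: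
  assumes "finite {ij. a ij \<noteq> 0}"
  shows "diffop_act a g m = (\<Sum>d\<in>(\<lambda>ij. fst ij - int (snd ij)) ` {ij. a ij \<noteq> 0}. Pd a d (m-d) * g (m-d))"
proof -
  let ?A = "{ij. a ij \<noteq> 0}"
  let ?deg = "\<lambda>ij::int\<times>nat. fst ij - int (snd ij)"
  have "diffop_act a g m = (\<Sum>d\<in>?deg ` ?A. \<Sum>ij\<in>{x. x \<in> ?A \<and> ?deg x = d}. a ij * ffact (snd ij) (m + int (snd ij) - fst ij) * g (m + int (snd ij) - fst ij))"
    unfolding diffop_act_def by (rule sum.group[symmetric]) (use assms in auto)
  also have "\<dots> = (\<Sum>d\<in>?deg ` ?A. Pd a d (m-d) * g (m-d))"
  proof (rule sum.cong[OF refl])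
    fix d assume "d \<in> ?deg ` ?A"
    have "(\<Sum>ij\<in>{x. x \<in> ?A \<and> ?deg x = d}. a ij * ffact (snd ij) (m + int (snd ij) - fst ij) * g (m + int (snd ij) - fst ij))
       = (\<Sum>ij\<in>{x. x \<in> ?A \<and> ?deg x = d}. a ij * ffact (snd ij) (m-d) * g (m-d))"
      by (rule sum.cong) (auto simp: algebra_simps)
    also have "\<dots> = Pd a d (m-d) * g (m-d)" unfolding Pd_def by (simp add: sum_distrib_right)
    finally show "(\<Sum>ij\<in>{x. x \<in> ?A \<and> ?deg x = d}. a ij * ffact (snd ij) (m + int (snd ij) - fst ij) * g (m + int (snd ij) - fst ij)) = Pd a d (m-d) * g (m-d)" .
  qed
  finally show ?thesis .
qed

lemma diffop_coef:
  assumes "finite {ij. a ij \<noteq> 0}"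
  shows "diffop_act a (monomial n) p = Pd a (p - n) n"
proof -
  have "diffop_act a (monomial n) p = (\<Sum>ij\<in>{ij. a ij \<noteq> 0}. if fst ij - int (snd ij) = p - n then a ij * ffact (snd ij) n else 0)"
    unfolding diffop_act_def monomial_def by (rule sum.cong) (auto intro!: arg_cong[where f="ffact _"])
  also have "\<dots> = (\<Sum>ij\<in>{x\<in>{ij. a ij \<noteq> 0}. fst x - int (snd x) = p - n}. a ij * ffact (snd ij) n)"
    by (rule sum.inter_filter[OF assms, symmetric])
  also have "\<dots> = Pd a (p - n) n" unfolding Pd_def by (rule sum.cong) auto
  finally show ?thesis .
qed

lemma diffop_lin: "diffop_act a (\<lambda>n. c * g n) = (\<lambda>m. c * diffop_act a g m)"
  unfolding diffop_act_def by (auto simp: sum_distrib_left mult.commute mult.left_commute)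

lemma ffact_zero: "k < j \<Longrightarrow> ffact j (int k) = 0"
  unfolding ffact_def by (rule prod_zero) auto

lemma ffact_nz: "ffact j (int j) \<noteq> 0"
  unfolding ffact_def by (auto simp: prod_zero_iff)

lemma Pd_zero:
  assumes fA: "finite {ij. a ij \<noteq> 0}" and h: "\<And>k::nat. Pd a d (int k) = 0"
  shows "Pd a d x = 0"
proof -
  define S where "S = {ij. a ij \<noteq> 0 \<and> fst ij - int (snd ij) = d}"
  have fS: "finite S" unfolding S_def by (rule finite_subset[OF _ fA]) auto
  have key: "\<forall>ij\<in>S. snd ij \<noteq> j" for j
  proof (induction j rule: less_induct)
    case (less j)
    show ?case
    proof (rule ccontr)
      assume "\<not> (\<forall>ij\<in>S. snd ij \<noteq> j)"
      then obtain ij0 where ij0: "ij0 \<in> S" "snd ij0 = j" by blast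
      have "Pd a d (int j) = (\<Sum>ij\<in>S. if ij = ij0 then a ij0 * ffact j (int j) else 0)"
        unfolding Pd_def S_def[symmetric]
      proof (rule sum.cong[OF refl])
        fix ij assume ijS: "ij \<in> S"
        show "a ij * ffact (snd ij) (int j) = (if ij = ij0 then a ij0 * ffact j (int j) else 0)"
        proof (cases "ij = ij0")
          case True then show ?thesis using ij0 by simp
        next
          case False
          have "snd ij \<noteq> j"
          proof
            assume "snd ij = j"
            then have "fst ij = fst ij0" using ijS ij0 unfolding S_def by auto
            then have "ij = ij0" using \<open>snd ij = j\<close> ij0 by (simp add: prod_eq_iff)
            then show False using False by simp
          qed
          moreover have "\<not> snd ij < j" using less ijS by blast
          ultimately have "j < snd ij" by simp
          then show ?thesis using False ffact_zero by simp
        qed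
      qed
      also have "\<dots> = a ij0 * ffact j (int j)" using fS ij0 by simp
      finally have "a ij0 * ffact j (int j) = 0" using h by simp
      moreover have "a ij0 \<noteq> 0" using ij0 unfolding S_def by simp
      ultimately show False using ffact_nz by simp
    qed
  qed
  have "S = {}" using key by blast
  then show ?thesis unfolding Pd_def S_def[symmetric] by simp
qed

lemma Pd_notin:
  assumes "d \<notin> (\<lambda>ij. fst ij - int (snd ij)) ` {ij. a ij \<noteq> 0}"
  shows "Pd a d x = 0"
proof -
  have e: "{ij. a ij \<noteq> 0 \<and> fst ij - int (snd ij) = d} = {}"
  proof (rule ccontr)
    assume "{ij. a ij \<noteq> 0 \<and> fst ij - int (snd ij) = d} \<noteq> {}"
    then obtain ij where "a ij \<noteq> 0" "fst ij - int (snd ij) = d" by blast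
    then have "d \<in> (\<lambda>ij. fst ij - int (snd ij)) ` {ij. a ij \<noteq> 0}" by force
    then show False using assms by blast
  qed
  show ?thesis unfolding Pd_def e by simp
qed

lemma high_zero:
  assumes adm: "admissible_basis \<phi>" and lift: "lifting_operator l \<phi>"
  shows "\<forall>d\<ge>2. \<forall>x. Pd l d x = 0"
proof (rule ccontr)
  assume neg: "\<not> ?thesis"
  let ?A = "{ij. l ij \<noteq> 0}"
  let ?deg = "\<lambda>ij::int\<times>nat. fst ij - int (snd ij)"
  let ?T = "?deg ` ?A"
  have fA: "finite ?A" using lift unfolding lifting_operator_def w1inf_def by auto
  have fT: "finite ?T" using fA by simp
  obtain a where ha: "\<forall>k\<ge>1. a k \<noteq> 0 \<and> (diffop_act l ^^ k) (\<phi> 0) = (\<lambda>n. a k * \<phi> k n)"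
    using lift unfolding lifting_operator_def by blast
  have step: "\<exists>c. diffop_act l (\<phi> k) = (\<lambda>n. c * \<phi> (Suc k) n)" for k
  proof (cases "k = 0")
    case True
    then show ?thesis using ha[rule_format, of 1] by auto
  next
    case False
    then have k1: "k \<ge> 1" by simp
    have "(\<lambda>n. a (Suc k) * \<phi> (Suc k) n) = (diffop_act l ^^ Suc k) (\<phi> 0)"
      using ha[rule_format, of "Suc k"] by simp
    also have "\<dots> = diffop_act l ((diffop_act l ^^ k) (\<phi> 0))" by simp
    also have "\<dots> = diffop_act l (\<lambda>n. a k * \<phi> k n)" using ha k1 by simp
    also have "\<dots> = (\<lambda>m. a k * diffop_act l (\<phi> k) m)" by (rule diffop_lin)
    finally have e: "(\<lambda>n. a (Suc k) * \<phi> (Suc k) n) = (\<lambda>m. a k * diffop_act l (\<phi> k) m)" .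
    have ak: "a k \<noteq> 0" using ha k1 by auto
    have "diffop_act l (\<phi> k) = (\<lambda>n. (a (Suc k) / a k) * \<phi> (Suc k) n)"
    proof
      fix n
      have "a (Suc k) * \<phi> (Suc k) n = a k * diffop_act l (\<phi> k) n" using fun_cong[OF e, of n] by simp
      then show "diffop_act l (\<phi> k) n = a (Suc k) / a k * \<phi> (Suc k) n"
        using ak by (simp add: field_simps)
    qed
    then show ?thesis by blast
  qed
  define S where "S = {d\<in>?T. 2 \<le> d \<and> (\<exists>x. Pd l d x \<noteq> 0)}"
  have fS: "finite S" unfolding S_def using fT by simp
  have neS: "S \<noteq> {}"
  proof -
    obtain d x where "d \<ge> 2" "Pd l d x \<noteq> 0" using neg by auto
    moreover then have "d \<in> ?T" using Pd_notin by blast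
    ultimately show ?thesis unfolding S_def by blast
  qed
  define D where "D = Max S"
  have DS: "D \<in> S" unfolding D_def using fS neS by simp
  then have D2: "D \<ge> 2" and DT: "D \<in> ?T" unfolding S_def by auto
  have hD: "Pd l d x = 0" if "d > D" for d x
  proof (rule ccontr)
    assume "Pd l d x \<noteq> 0"
    moreover then have "d \<in> ?T" using Pd_notin by blast
    ultimately have "d \<in> S" unfolding S_def using that D2 by auto
    then have "d \<le> D" unfolding D_def using fS by simp
    then show False using that by simp
  qed
  have PDk: "Pd l D (int k) = 0" for k :: nat
  proof -
    obtain c where c: "diffop_act l (\<phi> k) = (\<lambda>n. c * \<phi> (Suc k) n)" using step by blast
    have "diffop_act l (\<phi> k) (int k + D) = 0"
      using c adm D2 unfolding admissible_basis_def by simp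
    moreover have "diffop_act l (\<phi> k) (int k + D) = (\<Sum>d\<in>?T. Pd l d (int k + D - d) * \<phi> k (int k + D - d))"
      by (rule diffop_group[OF fA])
    moreover have "\<dots> = (\<Sum>d\<in>?T. if d = D then Pd l D (int k) else 0)"
    proof (rule sum.cong[OF refl])
      fix d assume "d \<in> ?T"
      show "Pd l d (int k + D - d) * \<phi> k (int k + D - d) = (if d = D then Pd l D (int k) else 0)"
      proof (cases "d = D")
        case True then show ?thesis using adm unfolding admissible_basis_def by simp
      next
        case False
        show ?thesis
        proof (cases "d < D")
          case True then show ?thesis using False adm unfolding admissible_basis_def by simp
        next
          case F2: False
          then have "d > D" using False by simp
          then show ?thesis using hD False by simp
        qed
      qed
    qed
    moreover have "\<dots> = Pd l D (int k)" using fT DT by simp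
    ultimately show ?thesis by simp
  qed
  have "\<forall>x. Pd l D x = 0" using Pd_zero[OF fA] PDk by blast
  then show False using DS unfolding S_def by auto
qed

lemma deg1:
  assumes lift: "lifting_operator l \<phi>"
  shows "Pd l 1 (-1) = 1"
proof -
  have fA: "finite {ij. l ij \<noteq> 0}" using lift unfolding lifting_operator_def w1inf_def by auto
  obtain c :: "nat \<Rightarrow> complex" where c: "finite {k. c k \<noteq> 0}" "c 0 = 1"
    "\<forall>g. diffop_act (deg_part l 1) g = (\<lambda>m. \<Sum>k\<in>{k. c k \<noteq> 0}. c k * of_int m ^ k * g (m - 1))"
    using lift unfolding lifting_operator_def by blast
  have f1: "finite {ij. deg_part l 1 ij \<noteq> 0}"
    by (rule finite_subset[OF _ fA]) (auto simp: deg_part_def)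
  have "Pd (deg_part l 1) 1 (-1) = diffop_act (deg_part l 1) (monomial (-1)) 0"
    using diffop_coef[OF f1, of "-1" 0] by simp
  also have "\<dots> = (\<Sum>k\<in>{k. c k \<noteq> 0}. c k * of_int 0 ^ k * monomial (-1) (0 - 1))"
    using c(3) by simp
  also have "\<dots> = (\<Sum>k\<in>{k. c k \<noteq> 0}. if k = 0 then c 0 else 0)"
    by (rule sum.cong) (auto simp: monomial_def)
  also have "\<dots> = 1" using c(1,2) by simp
  finally have "Pd (deg_part l 1) 1 (-1) = 1" .
  moreover have "Pd (deg_part l 1) 1 (-1) = Pd l 1 (-1)"
    unfolding Pd_def deg_part_def by (rule sum.cong) auto
  ultimately show ?thesis by simp
qed

lemma psistar_vac: "psistar p vac = (\<lambda>E. if 0 \<le> p \<and> E = {p} then 1 else 0)"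
proof
  fix E :: "int set"
  show "psistar p vac E = (if 0 \<le> p \<and> E = {p} then 1 else 0)"
  proof (cases "0 \<le> p")
    case True
    have e1: "(p \<in> E \<and> E - {p} = {}) = (E = {p})" by auto
    have z: "{d. d = p \<and> p < d} = {}" by auto
    show ?thesis using True e1 unfolding psistar_def braX_def vac_def bsign_def by (auto simp: z)
  next
    case False
    then show ?thesis unfolding psistar_def braY_def vac_def by simp
  qed
qed

lemma psi_on: "psi n (\<lambda>E. if 0 \<le> p \<and> E = {p} then 1 else 0) =
   (\<lambda>E. if n < 0 \<and> 0 \<le> p \<and> E = {n, p} then -1 else if 0 \<le> n \<and> n = p \<and> E = {} then 1 else 0)"
proof
  fix E :: "int set"
  show "psi n (\<lambda>E. if 0 \<le> p \<and> E = {p} then 1 else 0) E =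
    (if n < 0 \<and> 0 \<le> p \<and> E = {n, p} then -1 else if 0 \<le> n \<and> n = p \<and> E = {} then 1 else 0)"
  proof (cases "n < 0")
    case True
    have eq: "(n \<in> E \<and> 0 \<le> p \<and> E - {n} = {p}) = (0 \<le> p \<and> E = {n, p})" using True by auto
    have c: "card {d \<in> {n, p}. n < d} = 1" if "0 \<le> p" using True that
    proof -
      have "{d \<in> {n, p}. n < d} = {p}" using True that by auto
      then show ?thesis by simp
    qed
    show ?thesis
    proof (cases "0 \<le> p \<and> E = {n, p}")
      case T2: True
      then show ?thesis using True c unfolding psi_def braX_def bsign_def by auto
    next
      case F2: False
      then have "\<not> (n \<in> E \<and> 0 \<le> p \<and> E - {n} = {p})" using eq by blast
      then show ?thesis using True F2 unfolding psi_def braX_def by auto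
    qed
  next
    case False
    have eq: "(n \<notin> E \<and> 0 \<le> p \<and> insert n E = {p}) = (n = p \<and> 0 \<le> p \<and> E = {})" by auto
    show ?thesis
    proof (cases "n = p \<and> E = {}")
      case True
      then show ?thesis using False unfolding psi_def braY_def bsign_def by simp
    next
      case F2: False
      then have "\<not> (n \<notin> E \<and> 0 \<le> p \<and> insert n E = {p})" using eq by blast
      then show ?thesis using False F2 unfolding psi_def braY_def by auto
    qed
  qed
qed

lemma np_vac: "normal_pair p n vac E = (if n < 0 \<and> 0 \<le> p \<and> E = {n, p} then -1 else 0)"
  unfolding normal_pair_def psistar_vac psi_on vev_def
  by (auto simp: vac_def)

lemma rhs: "psi (-1) (psistar 0 vac) = (\<lambda>E. if E = {-1, 0} then -1 else 0)"
proof
  fix E :: "int set"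
  show "psi (-1) (psistar 0 vac) E = (if E = {-1, 0} then -1 else 0)"
  proof (cases "E = {-1, 0}")
    case True
    have a: "{d \<in> E. - 1 < d} = {0}" using True by auto
    have b: "{d \<in> E - {- 1}. 0 < d} = {}" using True by auto
    have c: "E - {- 1} - {0} = {}" using True by auto
    have b2: "{d::int. d = 0 \<and> 0 < d} = {}" by auto
    show ?thesis unfolding psi_def psistar_def braX_def braY_def vac_def bsign_def
      using True a b c by (simp add: b2)
  next
    case False
    then have "\<not> (-1 \<in> E \<and> 0 \<in> E - {-1} \<and> E - {- 1} - {0} = {})" by auto
    then show ?thesis unfolding psi_def psistar_def braX_def braY_def vac_def bsign_def
      using False by auto
  qed
qed

theorem lemma4p3:
  fixes l :: "int \<times> nat \<Rightarrow> complex" and \<phi> :: "nat \<Rightarrow> int \<Rightarrow> complex"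
  assumes "admissible_basis \<phi>"
    and "lifting_operator l \<phi>"
  shows "hat l vac = psi (-1) (psistar 0 vac)"
proof
  fix E :: "int set"
  have fA: "finite {ij. l ij \<noteq> 0}" using assms(2) unfolding lifting_operator_def w1inf_def by auto
  have hz: "\<forall>d\<ge>2. \<forall>x. Pd l d x = 0" by (rule high_zero[OF assms])
  have h1: "Pd l 1 (-1) = 1" by (rule deg1[OF assms(2)])
  define v :: complex where "v = (if E = {-1, 0} then -1 else 0)"
  have summ: "diffop_act l (monomial (snd pn)) (fst pn) * normal_pair (fst pn) (snd pn) vac E
      = (if pn = (0, -1) then v else 0)" for pn :: "int \<times> int"
  proof -
    obtain p n where pn: "pn = (p, n)" by force
    show ?thesis
    proof (cases "n < 0 \<and> 0 \<le> p \<and> E = {n, p}")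
      case True
      have co: "diffop_act l (monomial n) p = Pd l (p - n) n" by (rule diffop_coef[OF fA])
      show ?thesis
      proof (cases "p - n \<ge> 2")
        case True
        then show ?thesis using co hz pn \<open>n < 0 \<and> 0 \<le> p \<and> E = {n, p}\<close> by (auto simp: np_vac)
      next
        case False
        then have "n = -1" "p = 0" using True by auto
        then show ?thesis using co h1 pn True by (simp add: np_vac v_def)
      qed
    next
      case False
      then show ?thesis using pn by (auto simp: np_vac v_def)
    qed
  qed
  have "hat l vac E = infsum (\<lambda>pn::int\<times>int. if pn = (0, -1) then v else 0) UNIV"
    unfolding hat_def using summ by simp
  also have "\<dots> = infsum (\<lambda>pn::int\<times>int. if pn = (0, -1) then v else 0) {(0, -1)}"
    by (rule infsum_cong_neutral) auto
  also have "\<dots> = v" by simp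
  finally show "hat l vac E = psi (-1) (psistar 0 vac) E" by (simp add: rhs v_def)
qed

end
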